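(* Let $\mathbb{A}$ be a finite subset of a Euclidean space $\mathbb{R}^n$, and let $\mathbb{A}^{\mathcal B}$ be the set of minimal combinations of $\mathbb{A}$. If $\beta \in \mathbb{A}^{\mathcal B}$ and $\beta \notin \mathbb{A}$, then there exists an affinely independent subset $S \subset \mathbb{A}$ with $\sharp(S) \geq 2$ such that $\beta$ is the nearest point from the origin $0$ to the convex polytope $\mathcal{C}(S)$ generated by $S$, and $\beta$ lies in the relative interior of $\mathcal{C}(S)$.
   Context: For a finite nonempty set $S \subset \mathbb{R}^n$, $\mathcal{C}(S)$ denotes its convex hull, and $\tau(S)$ denotes the unique point of $\mathcal{C}(S)$ of minimal Euclidean norm (the nearest point of $\mathcal{C}(S)$ to the origin). The set of minimal combinations of a finite set $\mathbb{A}$ is $\mathbb{A}^{\mathcal B} = \{\tau(S) : S \subset \mathbb{A},\ S \neq \varnothing\}$. $\sharp(S)$ denotes the cardinality of $S$. For an affinely independent set $S = \{x_1,\dots,x_s\}$, the relative interior of $\mathcal{C}(S)$ is $\{\sum_{i=1}^s \lambda_i x_i : \sum_i \lambda_i = 1,\ \lambda_1,\dots,\lambda_s > 0\}$. *)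

theory Defs
  imports "HOL-Analysis.Analysis"
begin

definition tau :: "'a::euclidean_space set \<Rightarrow> 'a" where
  "tau S = closest_point (convex hull S) 0"

definition minimal_combinations :: "'a::euclidean_space set \<Rightarrow> 'a set" where
  "minimal_combinations A = {tau S | S. S \<subseteq> A \<and> S \<noteq> {}}"

end

theory Submission
  imports Defs
begin

theorem theorem1:
  fixes A :: "'a::euclidean_space set" and \<beta> :: 'a
  assumes "finite A"
    and "\<beta> \<in> minimal_combinations A"
    and "\<beta> \<notin> A"
  shows "\<exists>S. S \<subseteq> A \<and> \<not> affine_dependent S \<and> card S \<ge> 2
            \<and> \<beta> = tau S
            \<and> (\<exists>u. (\<forall>x\<in>S. u x > 0) \<and> sum u S = 1 \<and> (\<Sum>x\<in>S. u x *\<^sub>R x) = \<beta>)"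
proof -
  obtain T where T: "T \<subseteq> A" "T \<noteq> {}" "\<beta> = tau T"
    using assms(2) unfolding minimal_combinations_def by auto
  have fT: "finite T" using T(1) assms(1) finite_subset by blast
  have clT: "closed (convex hull T)"
    using fT by (simp add: compact_convex_hull finite_imp_compact compact_imp_closed)
  have bT: "\<beta> \<in> convex hull T"
    using T closest_point_in_set[OF clT] by (simp add: tau_def)
  have bmin: "\<forall>z\<in>convex hull T. dist 0 \<beta> \<le> dist 0 z"
    using T closest_point_le[OF clT, of _ 0] by (simp add: tau_def)
  define P where "P n = (\<exists>S. S \<subseteq> T \<and> card S = n \<and> \<beta> \<in> convex hull S)" for n
  have "P (card T)" using bT P_def by blast
  then have PL: "P (LEAST n. P n)" by (rule LeastI)
  then obtain S where S: "S \<subseteq> T" "card S = (LEAST n. P n)" "\<beta> \<in> convex hull S"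
    using P_def by blast
  have minS: "card S \<le> card S'" if "S' \<subseteq> T" "\<beta> \<in> convex hull S'" for S'
    using S(2) Least_le[of P "card S'"] that P_def by auto
  have fS: "finite S" using S(1) fT finite_subset by blast
  have SA: "S \<subseteq> A" using S(1) T(1) by blast
  have Sne: "S \<noteq> {}" using S(3) by auto
  have "\<beta> \<in> convex hull S" by fact
  then obtain S' u where S': "finite S'" "S' \<subseteq> S" "card S' \<le> aff_dim S + 1"
      "\<forall>x\<in>S'. 0 \<le> u x" "sum u S' = 1" "(\<Sum>v\<in>S'. u v *\<^sub>R v) = \<beta>"
    unfolding convex_hull_caratheodory_aff_dim[of S] by blast
  have "\<beta> \<in> convex hull S'"
    using S' by (auto simp: convex_hull_finite)
  then have "card S \<le> card S'" using minS S'(2) S(1) by blast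
  then have "int (card S) \<le> aff_dim S + 1" using S'(3) by linarith
  moreover have "aff_dim S \<le> int (card S) - 1" using aff_dim_le_card[OF fS] .
  ultimately have "int (card S) = aff_dim S + 1" by linarith
  then have indep: "\<not> affine_dependent S"
    using affine_independent_iff_card[of S] fS by simp
  have clS: "closed (convex hull S)"
    using fS by (simp add: compact_convex_hull finite_imp_compact compact_imp_closed)
  have "convex hull S \<subseteq> convex hull T" using S(1) by (simp add: hull_mono)
  then have "\<beta> = closest_point (convex hull S) 0"
    using closest_point_unique[OF convex_convex_hull clS S(3)] bmin by blast
  then have tauS: "\<beta> = tau S" by (simp add: tau_def)
  obtain w where w: "\<forall>x\<in>S. 0 \<le> w x" "sum w S = 1" "(\<Sum>x\<in>S. w x *\<^sub>R x) = \<beta>"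
    using S(3) fS by (auto simp: convex_hull_finite)
  have wpos: "\<forall>x\<in>S. w x > 0"
  proof (rule ccontr)
    assume "\<not> (\<forall>x\<in>S. w x > 0)"
    then obtain a where a: "a \<in> S" "w a = 0" using w(1) by force
    have e1: "sum w (S - {a}) = 1" using w(2) a fS by (simp add: sum.remove)
    have e2: "(\<Sum>x\<in>S - {a}. w x *\<^sub>R x) = \<beta>" using w(3) a fS by (simp add: sum.remove)
    have "\<beta> \<in> convex hull (S - {a})"
      using e1 e2 w(1) fS by (auto simp: convex_hull_finite)
    then have "card S \<le> card (S - {a})" using minS S(1) by blast
    then show False using a fS Sne card_gt_0_iff[of S] by simp
  qed
  have c2: "card S \<ge> 2"
  proof (rule ccontr)
    assume "\<not> card S \<ge> 2"
    then have "card S = 1" using Sne fS by (metis One_nat_def Suc_1 card_0_eq less_2_cases not_le)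
    then obtain x where "S = {x}" by (metis card_1_singletonE)
    then have "\<beta> = x" using S(3) by simp
    then show False using \<open>S = {x}\<close> SA assms(3) by blast
  qed
  show ?thesis using SA indep c2 tauS wpos w by blast
qed

end
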